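(* For every $M>0$ there exists $\rho=\rho(M)\in(0,1)$ such that if $f:\mathbb D\to\mathbb D$ is analytic and $\sup_{z\in\mathbb D}\frac{(1-|z|^2)|f'(z)|}{1-|f(z)|^2}\ge\rho$, then $f(\mathbb D)$ contains a hyperbolic disc of hyperbolic radius $M$.
   Context: The hyperbolic distance on $\mathbb D$ is $d_h(z,w)=\frac12\log\frac{1+\rho(z,w)^2}{1-\rho(z,w)^2}$ with $\rho(z,w)=\big|\frac{z-w}{1-\overline wz}\big|$; a hyperbolic disc of hyperbolic radius $M$ is a set $\{w\in\mathbb D: d_h(w,a)<M\}$, $a\in\mathbb D$. *)

theory Defs
  imports "HOL-Complex_Analysis.Complex_Analysis"
begin

definition pseudo_hyp :: "complex \<Rightarrow> complex \<Rightarrow> real" where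
  "pseudo_hyp z w = cmod ((z - w) / (1 - cnj w * z))"

definition hyp_dist :: "complex \<Rightarrow> complex \<Rightarrow> real" where
  "hyp_dist z w = (1/2) * ln ((1 + (pseudo_hyp z w)\<^sup>2) / (1 - (pseudo_hyp z w)\<^sup>2))"

definition hyp_disc :: "complex \<Rightarrow> real \<Rightarrow> complex set" where
  "hyp_disc a M = {w \<in> ball 0 1. hyp_dist w a < M}"

end

theory Submission
  imports Defs
begin


lemma norm_sq_identity:
  fixes k :: complex and a :: real
  shows "(cmod (1 - a*k))^2 - (cmod (k - a))^2 = (1 - a^2) * (1 - (cmod k)^2)"
proof -
  have "(cmod (1 - a*k))^2 = (1 - a * Re k)^2 + (a * Im k)^2"
    unfolding cmod_power2 by (simp add: power2_eq_square algebra_simps)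
  moreover have "(cmod (k - a))^2 = (Re k - a)^2 + (Im k)^2"
    by (simp add: cmod_power2)
  moreover have "(cmod k)^2 = (Re k)^2 + (Im k)^2"
    by (simp add: cmod_power2)
  ultimately show ?thesis by (simp add: power2_eq_square algebra_simps)
qed

lemma alg_bound:
  fixes k :: complex and a t :: real
  assumes k: "cmod k < 1" and a: "0 < a" "a < 1" and s: "0 \<le> t" "t < 1"
    and u: "cmod ((k - a) / (1 - a*k)) \<le> t"
  shows "1 - (cmod k)^2 \<le> (1 - a^2) / (1 - a*t)^2"
proof -
  define u where "u = (k - a) / (1 - a*k)"
  have nz: "1 - a*k \<noteq> 0"
  proof
    assume "1 - a*k = 0"
    then have "cmod (a*k) = 1" by (metis norm_one right_minus_eq)
    moreover have "cmod (a*k) < 1" using k a mult_left_le_one_le[of "cmod k" a] by (simp add: norm_mult)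
    ultimately show False by simp
  qed
  have prod: "(1 + a*u) * (1 - a*k) = 1 - a^2"
    using nz unfolding u_def by (simp add: field_simps power2_eq_square)
  have "cmod (1 + a*u) \<ge> 1 - a*t"
  proof -
    have "cmod (a*u) \<le> a*t" proof -
      have "cmod u \<le> t" using u unfolding u_def .
      then have "a * cmod u \<le> a * t" using a by (simp add: mult_left_mono)
      moreover have "cmod (a*u) = a * cmod u" using a by (simp add: norm_mult)
      ultimately show ?thesis by simp
    qed
    then show ?thesis using norm_triangle_ineq2[of 1 "-(a*u)"] by simp
  qed
  moreover have pos: "1 - a*t > 0" using a s mult_left_le_one_le[of t a] by simp
  ultimately have "cmod (1 - a*k) * (1 - a*t) \<le> cmod (1 - a*k) * cmod (1 + a*u)"
    by (simp add: mult_left_mono)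
  also have "\<dots> = 1 - a^2" using prod a
    by (metis abs_of_nonneg mult.commute norm_mult norm_of_real of_real_1 of_real_diff of_real_power less_eq_real_def one_power2 power_strict_mono zero_le_power2 diff_ge_0_iff_ge  power_le_one)
  finally have le1: "cmod (1 - a*k) \<le> (1 - a^2) / (1 - a*t)" using pos by (simp add: field_simps)
  have "1 - (cmod k)^2 = ((cmod (1 - a*k))^2 - (cmod (k - a))^2) / (1 - a^2)"
  proof -
    have a2: "a^2 < 1" using a by (simp add: abs_square_less_1)
    show ?thesis unfolding norm_sq_identity using a2 by simp
  qed
  also have "\<dots> \<le> (cmod (1 - a*k))^2 / (1 - a^2)"
    using a by (simp add: divide_right_mono power_le_one)
  also have "\<dots> \<le> ((1 - a^2) / (1 - a*t))^2 / (1 - a^2)"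
    using a le1 by (intro divide_right_mono power_mono) (auto simp: power_le_one)
  also have "\<dots> = (1 - a^2) / (1 - a*t)^2"
  proof -
    have "a^2 < 1" using a by (simp add: abs_square_less_1)
    then have "1 - a^2 \<noteq> 0" by simp
    then show ?thesis by (simp add: power_divide power2_eq_square)
  qed
  finally show ?thesis .
qed


lemma cover:
  fixes G :: "complex \<Rightarrow> complex" and a s R :: real
  assumes holG: "G holomorphic_on ball 0 1" and GD: "G ` ball 0 1 \<subseteq> ball 0 1" and G0: "G 0 = 0"
    and a: "0 < a" "a < 1" and aG: "a < cmod (deriv G 0)"
    and s: "0 < s" "s < 1" and R: "0 < R"
    and Rs: "R^2 < s^2 * (1 - (1 - a^2) / (1 - a * s)^2)"
  shows "ball 0 R \<subseteq> G ` ball 0 1"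
proof -
  obtain h where holh: "h holomorphic_on ball 0 1" and Gh: "\<And>z. norm z < 1 \<Longrightarrow> G z = z * h z"
    and dh: "deriv G 0 = h 0"
    using Schwarz3[OF holG G0] by metis
  have Gno: "\<And>z. norm z < 1 \<Longrightarrow> norm (G z) < 1" using GD by (simp add: image_subset_iff)
  have h1: "cmod (h z) \<le> 1" if "norm z < 1" for z
  proof (cases "z = 0")
    case True
    then show ?thesis using Schwarz_Lemma(2)[OF holG G0 Gno, of 0] dh by simp
  next
    case False
    have "cmod (G z) \<le> cmod z" using Schwarz_Lemma(1)[OF holG G0 Gno that] .
    then have "cmod z * cmod (h z) \<le> cmod z * 1" using Gh[OF that] by (simp add: norm_mult)
    then show ?thesis using False by simp
  qed
  have h0: "h 0 \<noteq> 0" using aG dh a by auto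
  define c where "c = complex_of_real a / h 0"
  define k where "k z = c * h z" for z
  have cn: "cmod c < 1" using aG dh a h0 by (simp add: c_def norm_divide)
  have k1: "cmod (k z) < 1" if "norm z < 1" for z
  proof -
    have "cmod (k z) = cmod c * cmod (h z)" by (simp add: k_def norm_mult)
    also have "\<dots> \<le> cmod c" using h1[OF that] mult_left_le[of "cmod (h z)" "cmod c"] by simp
    finally show ?thesis using cn by simp
  qed
  have kh: "cmod (k z) \<le> cmod (h z)" if "norm z < 1" for z
    using h1[OF that] cn mult_right_le_one_le[of "cmod (h z)" "cmod c"] by (simp add: k_def norm_mult mult.commute)
  have k0: "k 0 = a" using h0 by (simp add: k_def c_def)
  have holk: "k holomorphic_on ball 0 1" unfolding k_def by (intro holomorphic_intros holh)
  define u where "u z = (k z - a) / (1 - a * k z)" for z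
  have den: "1 - a * k z \<noteq> 0" if "norm z < 1" for z
  proof
    assume "1 - a * k z = 0"
    then have "cmod (a * k z) = 1" by (metis norm_one right_minus_eq)
    moreover have "cmod (a * k z) < 1" using k1[OF that] a mult_left_le_one_le[of "cmod (k z)" a] by (simp add: norm_mult)
    ultimately show False by simp
  qed
  have holu: "u holomorphic_on ball 0 1" unfolding u_def
    using den by (intro holomorphic_intros holk) auto
  have u0: "u 0 = 0" by (simp add: u_def k0)
  have un: "norm (u z) < 1" if "norm z < 1" for z
  proof -
    have "u z = Moebius_function 0 (complex_of_real a) (k z)"
      by (simp add: u_def Moebius_function_simple)
    also have "norm \<dots> < 1" using Moebius_function_norm_lt_1 k1[OF that] a by simp
    finally show ?thesis .
  qed
  have bnd: "R < cmod (G z)" if zs: "cmod z = s" for z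
  proof -
    have z1: "norm z < 1" using zs s by simp
    have "cmod (u z) \<le> s" using Schwarz_Lemma(1)[OF holu u0 un z1] zs by simp
    then have "1 - (cmod (k z))^2 \<le> (1 - a^2) / (1 - a * s)^2"
      using alg_bound[OF k1[OF z1] a(1) a(2) _ s(2)] s unfolding u_def by simp
    then have "s^2 * (1 - (1 - a^2) / (1 - a * s)^2) \<le> s^2 * (cmod (k z))^2"
      by (intro mult_left_mono) auto
    also have "\<dots> \<le> s^2 * (cmod (h z))^2"
      using kh[OF z1] by (intro mult_left_mono power_mono) auto
    also have "\<dots> = (cmod (G z))^2" using Gh[OF z1] zs by (simp add: norm_mult power_mult_distrib)
    finally have "R^2 < (cmod (G z))^2" using Rs by simp
    then show ?thesis using R by (smt (verit) norm_ge_zero power_mono)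
  qed
  define U where "U = G ` ball 0 s"
  have nc: "\<not> G constant_on ball 0 1"
  proof
    assume "G constant_on ball 0 1"
    then obtain c0 where c0: "\<And>z. z \<in> ball 0 1 \<Longrightarrow> G z = c0" unfolding constant_on_def by blast
    have "((\<lambda>_. c0) has_field_derivative 0) (at 0)" by simp
    then have "(G has_field_derivative 0) (at 0)"
      by (rule has_field_derivative_transform_within_open[where S="ball 0 1"]) (use c0 in auto)
    then have "deriv G 0 = 0" by (rule DERIV_imp_deriv)
    then show False using aG a by simp
  qed
  have openU: "open U" unfolding U_def
    by (rule open_mapping_thm[OF holG _ _ _ _ nc]) (use s in auto)
  have sub: "ball 0 s \<subseteq> ball 0 1" "cball 0 s \<subseteq> ball 0 1" using s by auto
  have "compact (G ` cball 0 s)"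
    by (intro compact_continuous_image continuous_on_subset[OF holomorphic_on_imp_continuous_on[OF holG] sub(2)]) auto
  then have clo: "closure U \<subseteq> G ` cball 0 s"
    unfolding U_def by (intro closure_minimal image_mono) (auto intro: compact_imp_closed)
  have "ball 0 R \<subseteq> U"
  proof (rule ccontr)
    assume nsub: "\<not> ball 0 R \<subseteq> U"
    have "0 \<in> ball 0 R \<inter> U" using G0 R s unfolding U_def by (auto intro!: image_eqI[of 0])
    then have "ball 0 R \<inter> U \<noteq> {}" by blast
    moreover have "ball 0 R - U \<noteq> {}" using nsub by auto
    ultimately have "ball 0 R \<inter> frontier U \<noteq> {}" by (intro connected_Int_frontier) auto
    then obtain p where p: "p \<in> ball 0 R" "p \<in> closure U" "p \<notin> U"
      using openU by (auto simp: frontier_def interior_open)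
    then obtain z where z: "z \<in> cball 0 s" "p = G z" using clo by auto
    have "z \<notin> ball 0 s" using p z unfolding U_def by auto
    then have "cmod z = s" using z by auto
    then have "R < cmod p" using bnd z by simp
    then show False using p by simp
  qed
  then show ?thesis unfolding U_def using sub by auto
qed


lemma moeb_deriv:
  "1 - cnj b * b \<noteq> 0 \<Longrightarrow> ((\<lambda>w. (w - b) / (1 - cnj b * w)) has_field_derivative (1 / (1 - cnj b * b))) (at b)"
  by (rule derivative_eq_intros refl | simp add: power2_eq_square)+

lemma cover_exists:
  fixes R :: real
  assumes R: "0 < R" "R < 1"
  shows "\<exists>a. 0 < a \<and> a < 1 \<and> (\<forall>G. G holomorphic_on ball 0 1 \<longrightarrow> G ` ball 0 1 \<subseteq> ball 0 1
     \<longrightarrow> G 0 = 0 \<longrightarrow> a < cmod (deriv G 0) \<longrightarrow> ball 0 R \<subseteq> G ` ball 0 1)"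
proof -
  define s where "s = (1 + R) / 2"
  have s: "0 < s" "s < 1" "R < s" using R by (auto simp: s_def)
  define d where "d = (1 - s)^2 * (1 - R^2 / s^2) / 2"
  have Rs2: "R^2 / s^2 < 1" using s R by (simp add: power_strict_mono)
  have d0: "0 < d" using s Rs2 by (simp add: d_def)
  have "(1 - s)^2 < 1" using s by (simp add: abs_square_less_1)
  moreover have "(1 - s)^2 * (1 - R^2 / s^2) \<le> (1 - s)^2"
    by (rule mult_left_le) auto
  then have "d \<le> (1 - s)^2 / 2" unfolding d_def by simp
  ultimately have d1: "d < 1" by linarith
  define a where "a = sqrt (1 - d)"
  have a: "0 < a" "a < 1" using d0 d1 by (auto simp: a_def)
  have a2: "1 - a^2 = d" using d1 by (simp add: a_def)
  have key: "R^2 < s^2 * (1 - (1 - a^2) / (1 - a * s)^2)"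
  proof -
    have "1 - s \<le> 1 - a * s" using a s by (simp add: mult_left_le_one_le)
    then have "(1 - s)^2 \<le> (1 - a * s)^2" using s by (intro power_mono) auto
    then have "(1 - a^2) / (1 - a * s)^2 \<le> d / (1 - s)^2"
    proof -
      have "0 < 1 - a * s" using a s mult_strict_mono[of a 1 s 1] by simp
      moreover have "0 < 1 - s" using s by simp
      ultimately have "0 < (1 - a * s)^2 * (1 - s)^2" by simp
      then show ?thesis unfolding a2 using d0 \<open>(1 - s)^2 \<le> (1 - a * s)^2\<close> by (intro divide_left_mono) auto
    qed
    also have "\<dots> = (1 - R^2 / s^2) / 2" using s by (simp add: d_def)
    also have "\<dots> < 1 - R^2 / s^2" using Rs2 by simp
    finally have "R^2 / s^2 < 1 - (1 - a^2) / (1 - a * s)^2" by simp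
    then show ?thesis using s by (simp add: field_simps)
  qed
  show ?thesis
    using a cover[OF _ _ _ a _ s(1) s(2) R(1) key] by blast
qed

lemma disc_radius:
  fixes M :: real
  assumes "M > 0"
  obtains R where "0 < R" "R < 1"
    "\<And>w b. w \<in> ball 0 1 \<Longrightarrow> b \<in> ball 0 1 \<Longrightarrow> hyp_dist w b < M \<Longrightarrow> pseudo_hyp w b < R"
proof -
  define E where "E = exp (2 * M)"
  have E: "1 < E" using assms by (simp add: E_def)
  define R where "R = sqrt ((E - 1) / (E + 1))"
  have R: "0 < R" "R < 1" using E by (auto simp: R_def)
  have "pseudo_hyp w b < R" if w: "w \<in> ball 0 1" and b: "b \<in> ball 0 1" and h: "hyp_dist w b < M" for w b
  proof -
    define p where "p = pseudo_hyp w b"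
    have "p = norm (Moebius_function 0 b w)" by (simp add: p_def pseudo_hyp_def Moebius_function_simple)
    then have p1: "p < 1" "0 \<le> p" using Moebius_function_norm_lt_1[of b w 0] w b by auto
    then have p2: "p^2 < 1" by (simp add: abs_square_less_1)
    have "ln ((1 + p^2) / (1 - p^2)) < 2 * M" using h by (simp add: hyp_dist_def p_def)
    then have "(1 + p^2) / (1 - p^2) < E"
    proof -
      assume l: "ln ((1 + p^2) / (1 - p^2)) < 2 * M"
      have "0 < (1 + p^2) / (1 - p^2)" using p2 by (intro divide_pos_pos) (auto simp: add_pos_nonneg)
      then have "(1 + p^2) / (1 - p^2) = exp (ln ((1 + p^2) / (1 - p^2)))" by simp
      also have "\<dots> < exp (2 * M)" using l by simp
      finally show ?thesis by (simp add: E_def)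
    qed
    then have "1 + p^2 < E * (1 - p^2)" using p2 by (simp add: field_simps)
    then have "p^2 * (E + 1) < E - 1" by (simp add: algebra_simps)
    then have "p^2 < (E - 1) / (E + 1)" using E by (simp add: field_simps)
    then have "sqrt (p^2) < R" unfolding R_def by (rule real_sqrt_less_mono)
    then show ?thesis using p1 by (simp add: p_def)
  qed
  then show ?thesis using that R by blast
qed

theorem mainTheorem12:
  fixes M :: real
  assumes "M > 0"
  shows "\<exists>\<rho>::real. 0 < \<rho> \<and> \<rho> < 1 \<and>
    (\<forall>f. f holomorphic_on ball 0 1 \<longrightarrow> f ` ball 0 1 \<subseteq> ball 0 1 \<longrightarrow>
      (SUP z\<in>ball 0 1. ereal ((1 - (cmod z)\<^sup>2) * cmod (deriv f z) / (1 - (cmod (f z))\<^sup>2))) \<ge> ereal \<rho> \<longrightarrow>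
      (\<exists>a \<in> ball 0 1. hyp_disc a M \<subseteq> f ` ball 0 1))"
proof -
  obtain R where R: "0 < R" "R < 1"
    and RM: "\<And>w b. w \<in> ball 0 1 \<Longrightarrow> b \<in> ball 0 1 \<Longrightarrow> hyp_dist w b < M \<Longrightarrow> pseudo_hyp w b < R"
    using disc_radius[OF assms] by metis
  obtain a where a: "0 < a" "a < 1" and cov: "\<And>G. G holomorphic_on ball 0 1 \<Longrightarrow> G ` ball 0 1 \<subseteq> ball 0 1
     \<Longrightarrow> G 0 = 0 \<Longrightarrow> a < cmod (deriv G 0) \<Longrightarrow> ball 0 R \<subseteq> G ` ball 0 1"
    using cover_exists[OF R] by metis
  show ?thesis
  proof (intro exI[of _ "(1 + a) / 2"] conjI allI impI)
    show "0 < (1 + a) / 2" "(1 + a) / 2 < 1" using a by auto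
  next
    fix f :: "complex \<Rightarrow> complex"
    assume holf: "f holomorphic_on ball 0 1" and fD: "f ` ball 0 1 \<subseteq> ball 0 1"
      and sup: "ereal ((1 + a) / 2) \<le> (SUP z\<in>ball 0 1. ereal ((1 - (cmod z)\<^sup>2) * cmod (deriv f z) / (1 - (cmod (f z))\<^sup>2)))"
    have "ereal a < (SUP z\<in>ball 0 1. ereal ((1 - (cmod z)\<^sup>2) * cmod (deriv f z) / (1 - (cmod (f z))\<^sup>2)))"
    proof -
      have "ereal a < ereal ((1 + a) / 2)" using a by simp
      then show ?thesis using sup by (rule less_le_trans)
    qed
    then obtain z0 where z0: "z0 \<in> ball 0 1"
      and Hz0: "a < (1 - (cmod z0)\<^sup>2) * cmod (deriv f z0) / (1 - (cmod (f z0))\<^sup>2)"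
      by (auto simp: less_SUP_iff)
    define b where "b = f z0"
    have b: "b \<in> ball 0 1" using fD z0 unfolding b_def by blast
    have z01: "norm z0 < 1" "norm (-z0) < 1" using z0 by auto
    have b1: "norm b < 1" using b by auto
    define \<psi> where "\<psi> = Moebius_function 0 (-z0)"
    define \<phi> where "\<phi> = Moebius_function 0 b"
    define G where "G = \<phi> \<circ> (f \<circ> \<psi>)"
    have \<psi>D: "\<psi> ` ball 0 1 \<subseteq> ball 0 1" using Moebius_function_norm_lt_1[OF z01(2)] by (auto simp: \<psi>_def)
    have fpD: "(f \<circ> \<psi>) ` ball 0 1 \<subseteq> ball 0 1" using \<psi>D fD by auto
    have holfp: "(f \<circ> \<psi>) holomorphic_on ball 0 1"
      using holomorphic_on_compose_gen[OF Moebius_function_holomorphic[OF z01(2)] holf] \<psi>D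
      by (simp add: \<psi>_def)
    have holG: "G holomorphic_on ball 0 1" unfolding G_def \<phi>_def
      using holomorphic_on_compose_gen[OF holfp Moebius_function_holomorphic[OF b1] fpD] .
    have GD: "G ` ball 0 1 \<subseteq> ball 0 1" using Moebius_function_norm_lt_1[OF b1] fpD
      by (auto simp: G_def \<phi>_def)
    have psi0: "\<psi> 0 = z0" by (simp add: \<psi>_def Moebius_function_of_zero)
    have G0: "G 0 = 0" by (simp add: G_def psi0 \<phi>_def b_def Moebius_function_eq_zero)
    have d1: "(\<psi> has_field_derivative (1 - cnj z0 * z0)) (at 0)"
      unfolding \<psi>_def Moebius_function_simple
      by (auto intro!: derivative_eq_intros)
    have d2: "(f has_field_derivative deriv f z0) (at (\<psi> 0))"
      unfolding psi0 using holomorphic_derivI[OF holf _ z0] by simp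
    have nzb: "1 - cnj b * b \<noteq> 0"
    proof -
      have "cnj b * b = of_real ((cmod b)^2)" by (metis complex_norm_square mult.commute of_real_power)
      then have eq: "1 - cnj b * b = of_real (1 - (cmod b)^2)" by simp
      have "(cmod b)^2 < 1" using b1 by (simp add: abs_square_less_1)
      then show ?thesis unfolding eq by (simp only: of_real_eq_0_iff)
    qed
    have d3: "(\<phi> has_field_derivative (1 / (1 - cnj b * b))) (at (f (\<psi> 0)))"
      unfolding \<phi>_def Moebius_function_simple psi0 b_def[symmetric]
      by (rule moeb_deriv[OF nzb])
    have "(G has_field_derivative (1 / (1 - cnj b * b)) * (deriv f z0 * (1 - cnj z0 * z0))) (at 0)"
    proof -
      have d4: "((f \<circ> \<psi>) has_field_derivative (deriv f z0 * (1 - cnj z0 * z0))) (at 0)"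
        by (rule DERIV_chain[OF d2 d1])
      show ?thesis unfolding G_def by (rule DERIV_chain[OF _ d4]) (use d3 in simp)
    qed
    then have dG: "deriv G 0 = (1 / (1 - cnj b * b)) * (deriv f z0 * (1 - cnj z0 * z0))"
      by (rule DERIV_imp_deriv)
    have nsq: "cmod (1 - cnj x * x) = 1 - (cmod x)^2" if "norm x < 1" for x
    proof -
      have "cnj x * x = of_real ((cmod x)^2)" by (metis complex_norm_square mult.commute of_real_power)
      then have eq: "1 - cnj x * x = of_real (1 - (cmod x)^2)" by simp
      have "(cmod x)^2 < 1" using that by (simp add: abs_square_less_1)
      then show ?thesis unfolding eq norm_of_real by simp
    qed
    have "cmod (deriv G 0) = cmod (deriv f z0) * cmod (1 - cnj z0 * z0) / cmod (1 - cnj b * b)"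
      unfolding dG by (simp add: norm_mult norm_divide)
    also have "\<dots> = (1 - (cmod z0)\<^sup>2) * cmod (deriv f z0) / (1 - (cmod (f z0))\<^sup>2)"
      unfolding nsq[OF b1] nsq[OF z01(1)] by (simp add: b_def)
    finally have "cmod (deriv G 0) = (1 - (cmod z0)\<^sup>2) * cmod (deriv f z0) / (1 - (cmod (f z0))\<^sup>2)" .
    then have aG: "a < cmod (deriv G 0)" using Hz0 by simp
    have ballG: "ball 0 R \<subseteq> G ` ball 0 1" using cov[OF holG GD G0 aG] .
    show "\<exists>a\<in>ball 0 1. hyp_disc a M \<subseteq> f ` ball 0 1"
    proof (intro bexI[OF _ b] subsetI)
      fix w assume "w \<in> hyp_disc b M"
      then have w: "w \<in> ball 0 1" "hyp_dist w b < M" by (auto simp: hyp_disc_def)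
      have "norm (\<phi> w) < R" using RM[OF w(1) b w(2)]
        by (simp add: pseudo_hyp_def \<phi>_def Moebius_function_simple)
      then obtain z where z: "z \<in> ball 0 1" "\<phi> w = G z" using ballG by force
      have fz: "f (\<psi> z) \<in> ball 0 1" using fpD z(1) by (auto simp: image_subset_iff)
      have "w = Moebius_function 0 (-b) (\<phi> w)"
        using Moebius_function_compose[of "-b" b w] b1 w by (simp add: \<phi>_def)
      also have "\<dots> = Moebius_function 0 (-b) (\<phi> (f (\<psi> z)))" using z by (simp add: G_def)
      also have "\<dots> = f (\<psi> z)"
        using Moebius_function_compose[of "-b" b "f (\<psi> z)"] b1 fz by (simp add: \<phi>_def)
      finally show "w \<in> f ` ball 0 1" using \<psi>D z(1) by (intro image_eqI[of _ f "\<psi> z"]) (auto simp: image_subset_iff)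
    qed
  qed
qed

end
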